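(* Let $\{c_n\}_{n\ge1}$ be a real sequence and $\{d_{n+1}\}_{n\ge1}$ a positive chain sequence having multiple parameter sequences, and let $P_0(x)=1$, $P_1(x)=x-c_1$, $P_{n+1}(x)=(x-c_{n+1})P_n(x)-d_{n+1}(x^2+1)P_{n-1}(x)$ for $n\ge1$. Let $\{M_{n+1}\}_{n\ge0}$ be the maximal parameter sequence of $\{d_{n+1}\}_{n\ge1}$, let $\tau_0=1$ and $\tau_n=\tau_{n-1}(1-ic_n)/(1+ic_n)$ for $n\ge1$, and let $\nu$ be the probability measure on the unit circle $\mathbb T$ whose Verblunsky coefficients are \[ \beta_{n-1}=\frac{1}{\tau_{n-1}}\,\frac{1-2M_n-ic_n}{1-ic_n},\qquad n\ge1 . \] Let $\varphi$ be the measure on $\mathbb R$ defined by $d\varphi(x)=-d\nu\big((x+i)/(x-i)\big)$, i.e. the image of $\nu$ under $\zeta\mapsto i(\zeta+1)/(\zeta-1)$, so that $\int_{\mathbb R}f\,d\varphi=\int_{\mathbb T\setminus\{1\}}f\big(i(\zeta+1)/(\zeta-1)\big)\,d\nu(\zeta)$. Then for every $n\ge0$, \[ \int_{-\infty}^{\infty}x^j\,\frac{P_n(x)}{(x^2+1)^n}\,d\varphi(x)=\gamma_n\,\delta_{n,j},\qquad j=0,1,\dots,n, \] where $\gamma_0=\int_{-\infty}^\infty d\varphi(x)=\int_{\mathbb T}d\nu(\zeta)=1$ and $\gamma_n=(1-M_n)\gamma_{n-1}$ for $n\ge1$.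
   Context: A sequence $\{d_{n+1}\}_{n\ge1}$ is a positive chain sequence if there is a parameter sequence $\{g_{n+1}\}_{n\ge0}$ with $0\le g_1<1$, $0<g_n<1$ for $n\ge2$, and $d_{n+1}=(1-g_n)g_{n+1}$ for $n\ge1$. The minimal parameter sequence $\{\ell_{n+1}\}_{n\ge0}$ is the one with $\ell_1=0$. The chain sequence has multiple parameter sequences if it has more than one parameter sequence; in that case the maximal parameter sequence $\{M_{n+1}\}_{n\ge0}$ is the parameter sequence with $g_n\le M_n$ for every parameter sequence $\{g_{n+1}\}$ and all $n$. For a nontrivial probability measure on $\mathbb T$ with monic orthogonal polynomials $\Phi_n$, the Verblunsky coefficients are $\alpha_n=-\overline{\Phi_{n+1}(0)}$, $n\ge0$. *)

theory Defs
  imports "HOL-Probability.Probability" "HOL-Computational_Algebra.Polynomial"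
begin

text \<open>A chain sequence is d :: nat => real, of which only d 2, d 3, ... matter
  (d (n+1) for n >= 1).  A parameter sequence is g :: nat => real, of which only
  g 1, g 2, ... matter (g (n+1) for n >= 0); the value g 0 is irrelevant.\<close>

definition is_param_seq :: "(nat \<Rightarrow> real) \<Rightarrow> (nat \<Rightarrow> real) \<Rightarrow> bool" where
  "is_param_seq d g \<longleftrightarrow>
     0 \<le> g 1 \<and> g 1 < 1 \<and> (\<forall>n\<ge>2. 0 < g n \<and> g n < 1) \<and>
     (\<forall>n\<ge>1. d (n + 1) = (1 - g n) * g (n + 1))"

definition positive_chain_seq :: "(nat \<Rightarrow> real) \<Rightarrow> bool" where
  "positive_chain_seq d \<longleftrightarrow> (\<forall>n\<ge>1. 0 < d (n + 1)) \<and> (\<exists>g. is_param_seq d g)"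

text \<open>Two parameter sequences are considered the same if they agree at all indices >= 1.\<close>
definition has_multiple_param_seqs :: "(nat \<Rightarrow> real) \<Rightarrow> bool" where
  "has_multiple_param_seqs d \<longleftrightarrow>
     (\<exists>g h. is_param_seq d g \<and> is_param_seq d h \<and> (\<exists>n\<ge>1. g n \<noteq> h n))"

definition is_max_param_seq :: "(nat \<Rightarrow> real) \<Rightarrow> (nat \<Rightarrow> real) \<Rightarrow> bool" where
  "is_max_param_seq d M \<longleftrightarrow>
     is_param_seq d M \<and> (\<forall>g. is_param_seq d g \<longrightarrow> (\<forall>n\<ge>1. g n \<le> M n))"

fun Pn :: "(nat \<Rightarrow> real) \<Rightarrow> (nat \<Rightarrow> real) \<Rightarrow> nat \<Rightarrow> real \<Rightarrow> real" where
  "Pn c d 0 x = 1"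
| "Pn c d (Suc 0) x = x - c 1"
| "Pn c d (Suc (Suc n)) x =
     (x - c (n + 2)) * Pn c d (Suc n) x - d (n + 2) * (x\<^sup>2 + 1) * Pn c d n x"

fun tau :: "(nat \<Rightarrow> real) \<Rightarrow> nat \<Rightarrow> complex" where
  "tau c 0 = 1"
| "tau c (Suc n) = tau c n * (1 - \<i> * of_real (c (Suc n))) / (1 + \<i> * of_real (c (Suc n)))"

fun gam :: "(nat \<Rightarrow> real) \<Rightarrow> nat \<Rightarrow> real" where
  "gam M 0 = 1"
| "gam M (Suc n) = (1 - M (Suc n)) * gam M n"

definition nontrivial_prob_on_circle :: "complex measure \<Rightarrow> bool" where
  "nontrivial_prob_on_circle \<nu> \<longleftrightarrow>
     sets \<nu> = sets borel \<and> prob_space \<nu> \<and> (AE z in \<nu>. cmod z = 1) \<and>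
     \<not> (\<exists>F. finite F \<and> (AE z in \<nu>. z \<in> F))"

definition is_monic_OP :: "complex measure \<Rightarrow> nat \<Rightarrow> complex poly \<Rightarrow> bool" where
  "is_monic_OP \<nu> n p \<longleftrightarrow>
     degree p = n \<and> lead_coeff p = 1 \<and>
     (\<forall>k<n. integral\<^sup>L \<nu> (\<lambda>z. poly p z * cnj (z ^ k)) = 0)"

definition monic_OP :: "complex measure \<Rightarrow> nat \<Rightarrow> complex poly" where
  "monic_OP \<nu> n = (THE p. is_monic_OP \<nu> n p)"

definition verblunsky :: "complex measure \<Rightarrow> nat \<Rightarrow> complex" where
  "verblunsky \<nu> n = - cnj (poly (monic_OP \<nu> (Suc n)) 0)"

text \<open>The measure phi on R: image of nu restricted to T minus {1} under
  zeta |-> i (zeta + 1)/(zeta - 1) (which is real on T minus {1}).\<close>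
definition cayley_push :: "complex measure \<Rightarrow> real measure" where
  "cayley_push \<nu> =
     distr (restrict_space \<nu> (- {1})) borel (\<lambda>\<zeta>. Re (\<i> * (\<zeta> + 1) / (\<zeta> - 1)))"

end

theory Submission imports Defs begin

definition ip :: "complex measure \<Rightarrow> (complex \<Rightarrow> complex) \<Rightarrow> (complex \<Rightarrow> complex) \<Rightarrow> complex" where
  "ip nu f g = (\<integral>z. f z * cnj (g z) \<partial>nu)"

lemma alg_pre:
  fixes t x A G W :: complex
  assumes "t \<noteq> 0" "1 - \<i> * x \<noteq> 0"
  shows "t * (1 - \<i> * x) / (1 + \<i> * x) * (G - inverse t * (A / (1 - \<i> * x)) * W) = t * (1 - \<i> * x) / (1 + \<i> * x) * G - A / (1 + \<i> * x) * W"
proof -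
  have h: "inverse t * t = 1" "inverse (1 - \<i> * x) * (1 - \<i> * x) = 1" using assms by auto
  show ?thesis unfolding divide_inverse using h by algebra
qed

lemma alg_Y:
  fixes z F G t x m :: complex
  assumes "t \<noteq> 0" "1 + \<i> * x \<noteq> 0" "1 - \<i> * x \<noteq> 0"
  shows "(z * F - t * ((1 - 2 * m + \<i> * x) / (1 + \<i> * x)) * G)
     - t * (1 - \<i> * x) / (1 + \<i> * x) * (G - inverse t * ((1 - 2 * m - \<i> * x) / (1 - \<i> * x)) * (z * F))
   = 2 * (1 - m) / (1 + \<i> * x) * (z * F - t * G)"
proof -
  have h: "inverse (1 + \<i> * x) * (1 + \<i> * x) = 1" using assms by auto
  show ?thesis unfolding alg_pre[OF assms(1,3)] unfolding divide_inverse using h by algebra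
qed

lemma alg_X:
  fixes z F G t x m :: complex
  assumes "t \<noteq> 0" "1 + \<i> * x \<noteq> 0" "1 - \<i> * x \<noteq> 0"
  shows "z * (z * F - t * ((1 - 2 * m + \<i> * x) / (1 + \<i> * x)) * G)
     - t * (1 - \<i> * x) / (1 + \<i> * x) * (G - inverse t * ((1 - 2 * m - \<i> * x) / (1 - \<i> * x)) * (z * F))
   = (z * ((1 + \<i> * x) * z + (1 - 2 * m - \<i> * x)) * F - t * ((1 - 2 * m + \<i> * x) * z + (1 - \<i> * x)) * G) / (1 + \<i> * x)"
proof -
  have h: "inverse (1 + \<i> * x) * (1 + \<i> * x) = 1" using assms by auto
  show ?thesis unfolding alg_pre[OF assms(1,3)] unfolding divide_inverse using h by algebra
qed

lemma cancel_b: "(b::complex) \<noteq> 0 \<Longrightarrow> a * b / 2 * (N / b) = a * N / 2"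
  by (simp add: field_simps)

lemma cancel_b2: "(b::complex) \<noteq> 0 \<Longrightarrow> a * b / 2 * (2 * (1 - m) / b * X) = (1 - m) * (a * X)"
  by (simp add: field_simps)

lemma cancel_b3: "(b::complex) \<noteq> 0 \<Longrightarrow> b / 2 * (N / b) = N / 2"
  by simp

lemma alg_step:
  fixes z F G t1 x2 m2 a1 :: complex
  assumes "1 + \<i> * x2 \<noteq> 0"
  shows "a1 * (1 + \<i> * x2) / 2 * ((z * ((1 + \<i> * x2) * z + (1 - 2 * m2 - \<i> * x2)) * F - t1 * ((1 - 2 * m2 + \<i> * x2) * z + (1 - \<i> * x2)) * G) / (1 + \<i> * x2))
   = ((1 + \<i> * x2) * z + (1 - \<i> * x2)) / 2 * (a1 * (z * F - t1 * G)) - m2 * z * (a1 * (F - t1 * G))"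
  unfolding cancel_b[OF assms] by (simp add: field_simps)

lemma alg_base:
  fixes z x m :: complex
  assumes "1 + \<i> * x \<noteq> 0"
  shows "(z - 1) * (((1 + \<i> * x) * z + (1 - \<i> * x)) / 2) = 1 * (1 + \<i> * x) / 2 * ((z * ((1 + \<i> * x) * z + (1 - 2 * m - \<i> * x)) * 1
   - 1 * ((1 - 2 * m + \<i> * x) * z + (1 - \<i> * x)) * 1) / (1 + \<i> * x))"
  unfolding cancel_b[OF assms] by (simp add: field_simps)

lemma gen_final:
  fixes A s z I R :: complex
  assumes "s \<noteq> 0" "z \<noteq> 0" "I \<noteq> 0"
  shows "(\<i> * A / s) ^ j * (I ^ (j + e) * R / s ^ (j + e)) / (I ^ 2 * z / s ^ 2) ^ (j + e)
    = \<i> ^ j * (-1) ^ e / I ^ (j + e) * (R * ((A / z) ^ j * ((- s) / z) ^ e))"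
proof -
  have m: "(- s / z) ^ e = (-1) ^ e * (s ^ e / z ^ e)" by (metis minus_divide_left power_minus power_divide)
  have mm: "((-1::complex) ^ e) * (-1) ^ e = 1" by (simp add: power_mult_distrib[symmetric])
  show ?thesis unfolding m using assms mm
    by (simp add: power_divide power_mult_distrib power_add power_mult[symmetric] field_simps) (simp add: power_mult power2_eq_square)
qed

lemma cnj_circ: "cmod z = 1 \<Longrightarrow> cnj z = inverse z"
proof -
  assume "cmod z = 1"
  then have "z * cnj z = 1" by (metis complex_norm_square norm_one of_real_1 power_one)
  then show ?thesis by (metis inverse_unique mult.commute)
qed

fun OPs :: "complex measure \<Rightarrow> nat \<Rightarrow> complex poly \<times> complex poly" where
  "OPs nu 0 = (1, 1)"
| "OPs nu (Suc n) = (case OPs nu n of (p, q) \<Rightarrow>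
     let c = ip nu (\<lambda>z. z * poly p z) (\<lambda>z. 1) / ip nu (poly q) (\<lambda>z. 1)
     in (pCons 0 p - smult c q, q - smult (cnj c) (pCons 0 p)))"

definition "Phi nu n = fst (OPs nu n)"
definition "Psi nu n = snd (OPs nu n)"
definition "sc nu n = ip nu (\<lambda>z. z * poly (Phi nu n) z) (\<lambda>z. 1) / ip nu (poly (Psi nu n)) (\<lambda>z. 1)"

lemma Phi0: "Phi nu 0 = 1" and Psi0: "Psi nu 0 = 1" by (simp_all add: Phi_def Psi_def)

lemma OPs_Suc: "Phi nu (Suc n) = pCons 0 (Phi nu n) - smult (sc nu n) (Psi nu n)"
  "Psi nu (Suc n) = Psi nu n - smult (cnj (sc nu n)) (pCons 0 (Phi nu n))"
  by (cases "OPs nu n"; simp add: Phi_def Psi_def sc_def Let_def)+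

lemma poly_OPs_Suc: "poly (Phi nu (Suc n)) z = z * poly (Phi nu n) z - sc nu n * poly (Psi nu n) z"
  "poly (Psi nu (Suc n)) z = poly (Psi nu n) z - cnj (sc nu n) * (z * poly (Phi nu n) z)"
  by (simp_all add: OPs_Suc)

locale circ =
  fixes nu :: "complex measure"
  assumes nt: "nontrivial_prob_on_circle nu"
begin

lemma sets_nu: "sets nu = sets borel" using nt by (simp add: nontrivial_prob_on_circle_def)
lemma prob: "prob_space nu" using nt by (simp add: nontrivial_prob_on_circle_def)
lemma AE_circ: "AE z in nu. cmod z = 1" using nt by (simp add: nontrivial_prob_on_circle_def)
lemma nonfin: "\<not> (\<exists>F. finite F \<and> (AE z in nu. z \<in> F))" using nt by (simp add: nontrivial_prob_on_circle_def)

lemma meas_cont: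
  fixes f :: "complex \<Rightarrow> 'b::topological_space"
  shows "continuous_on UNIV f \<Longrightarrow> f \<in> borel_measurable nu"
  using borel_measurable_continuous_onI measurable_cong_sets[OF sets_nu refl] by blast

lemma int_cont:
  fixes f :: "complex \<Rightarrow> 'b::{banach,second_countable_topology}"
  assumes "continuous_on UNIV f" shows "integrable nu f"
proof -
  have "compact (f ` cball 0 1)"
    by (rule compact_continuous_image) (use assms continuous_on_subset in auto)
  then obtain B where B: "\<forall>y\<in>f ` cball 0 1. norm y \<le> B"
    using compact_imp_bounded bounded_iff by metis
  have "AE z in nu. norm (f z) \<le> B" using AE_circ by eventually_elim (use B in auto)
  then show ?thesis
    using finite_measure.integrable_const_bound[of nu] prob_space.finite_measure[OF prob] meas_cont[OF assms]
    by blast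
qed

lemma circ_eq:
  assumes "continuous_on UNIV F" "continuous_on UNIV f" "continuous_on UNIV g"
    "\<And>z. cmod z = 1 \<Longrightarrow> f z * cnj (g z) = F z"
  shows "ip nu f g = integral\<^sup>L nu F"
  unfolding ip_def
  by (rule integral_cong_AE) (use assms AE_circ in \<open>auto intro!: meas_cont continuous_intros elim: AE_mp\<close>)

lemma ip_add1:
  assumes "continuous_on UNIV f" "continuous_on UNIV g" "continuous_on UNIV h"
  shows "ip nu (\<lambda>z. f z + g z) h = ip nu f h + ip nu g h"
  unfolding ip_def distrib_right
  by (rule Bochner_Integration.integral_add) (use assms in \<open>auto intro!: int_cont continuous_intros\<close>)

lemma ip_diff1:
  assumes "continuous_on UNIV f" "continuous_on UNIV g" "continuous_on UNIV h"
  shows "ip nu (\<lambda>z. f z - g z) h = ip nu f h - ip nu g h"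
  unfolding ip_def left_diff_distrib
  by (rule Bochner_Integration.integral_diff) (use assms in \<open>auto intro!: int_cont continuous_intros\<close>)

lemma ip_mult1: "ip nu (\<lambda>z. a * f z) h = a * ip nu f h"
  unfolding ip_def by (simp add: mult.assoc)

lemma ip_cnj: "ip nu f g = cnj (ip nu g f)"
  unfolding ip_def Bochner_Integration.integral_cnj[symmetric] by (simp add: mult.commute)

lemma ip_sum2:
  assumes "finite A" "continuous_on UNIV f" "\<And>i. continuous_on UNIV (g i)"
  shows "ip nu f (\<lambda>z. \<Sum>i\<in>A. a i * g i z) = (\<Sum>i\<in>A. cnj (a i) * ip nu f (g i))"
proof -
  have "ip nu f (\<lambda>z. \<Sum>i\<in>A. a i * g i z) = (\<integral>z. (\<Sum>i\<in>A. cnj (a i) * (f z * cnj (g i z))) \<partial>nu)"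
    unfolding ip_def by (simp add: sum_distrib_left mult_ac)
  also have "\<dots> = (\<Sum>i\<in>A. \<integral>z. cnj (a i) * (f z * cnj (g i z)) \<partial>nu)"
    by (rule Bochner_Integration.integral_sum) (use assms in \<open>auto intro!: int_cont continuous_intros\<close>)
  also have "\<dots> = (\<Sum>i\<in>A. cnj (a i) * ip nu f (g i))" unfolding ip_def by simp
  finally show ?thesis .
qed

lemma ip_poly_expand:
  assumes "continuous_on UNIV f"
  shows "ip nu f (poly r) = (\<Sum>i\<le>degree r. cnj (coeff r i) * ip nu f (\<lambda>z. z ^ i))"
proof -
  have "poly r = (\<lambda>z. \<Sum>i\<le>degree r. coeff r i * z ^ i)" by (rule ext) (simp add: poly_altdef)
  then show ?thesis using ip_sum2[OF _ assms, of "{..degree r}" "\<lambda>i z. z ^ i" "coeff r"]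
    by (simp add: continuous_intros)
qed

lemma orth_poly:
  assumes "continuous_on UNIV f" "\<forall>k<n. ip nu f (\<lambda>z. z ^ k) = 0" "degree r < n"
  shows "ip nu f (poly r) = 0"
  unfolding ip_poly_expand[OF assms(1)] using assms(2,3) by (auto intro!: sum.neutral)

lemma norm_pos:
  assumes "p \<noteq> 0"
  shows "ip nu (poly p) (poly p) = of_real (\<integral>z. cmod (poly p z) ^ 2 \<partial>nu)"
    "(\<integral>z. cmod (poly p z) ^ 2 \<partial>nu) > 0"
proof -
  show "ip nu (poly p) (poly p) = of_real (\<integral>z. cmod (poly p z) ^ 2 \<partial>nu)"
    unfolding ip_def complex_norm_square[symmetric] by (rule integral_complex_of_real)
  have int: "integrable nu (\<lambda>z. cmod (poly p z) ^ 2)" by (intro int_cont continuous_intros)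
  have ge: "(\<integral>z. cmod (poly p z) ^ 2 \<partial>nu) \<ge> 0" by (rule integral_nonneg_AE) auto
  have "(\<integral>z. cmod (poly p z) ^ 2 \<partial>nu) \<noteq> 0"
  proof
    assume "(\<integral>z. cmod (poly p z) ^ 2 \<partial>nu) = 0"
    then have "AE z in nu. cmod (poly p z) ^ 2 = 0"
      using integral_nonneg_eq_0_iff_AE[OF int] by auto
    then have "AE z in nu. z \<in> {x. poly p x = 0}" by eventually_elim simp
    then show False using nonfin poly_roots_finite[OF assms] by blast
  qed
  with ge show "(\<integral>z. cmod (poly p z) ^ 2 \<partial>nu) > 0" by linarith
qed

lemma uniq:
  assumes "degree p = n" "coeff p n = 1" "degree q = n" "coeff q n = 1"
    "\<forall>k<n. ip nu (poly p) (\<lambda>z. z ^ k) = 0" "\<forall>k<n. ip nu (poly q) (\<lambda>z. z ^ k) = 0"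
  shows "p = q"
proof (rule ccontr)
  assume ne: "p \<noteq> q"
  define r where "r = p - q"
  have r0: "r \<noteq> 0" using ne by (simp add: r_def)
  have "degree r \<le> n" unfolding r_def using assms by (intro degree_diff_le) auto
  moreover have "coeff r n = 0" using assms by (simp add: r_def)
  ultimately have dr: "degree r < n" using r0 leading_coeff_0_iff
    by (metis le_neq_implies_less)
  have pr: "poly r = (\<lambda>z. poly p z - poly q z)" by (rule ext) (simp add: r_def)
  have "ip nu (poly r) (poly r) = ip nu (\<lambda>z. poly p z - poly q z) (poly r)"
    by (simp only: pr)
  also have "\<dots> = ip nu (poly p) (poly r) - ip nu (poly q) (poly r)"
    by (rule ip_diff1) (intro continuous_intros)+
  also have "\<dots> = 0" using orth_poly[OF _ assms(5) dr] orth_poly[OF _ assms(6) dr]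
    by (simp add: continuous_intros)
  finally show False using norm_pos[OF r0] by simp
qed


lemma circ_pow: "cmod z = 1 \<Longrightarrow> k \<le> n \<Longrightarrow> z ^ n * cnj (z ^ k) = z ^ (n - k)"
proof -
  assume z: "cmod z = 1" and k: "k \<le> n"
  have z0: "z \<noteq> 0" using z by auto
  have "z ^ n = z ^ (n - k) * z ^ k" using k by (simp add: power_add[symmetric])
  then show ?thesis using z0 by (simp add: cnj_circ[OF z] power_inverse)
qed

lemma step_props:
  fixes p q :: "complex poly" and n :: nat
  assumes dp: "degree p = n" and cp: "coeff p n = 1" and dq: "degree q \<le> n"
    and circq: "\<forall>z. cmod z = 1 \<longrightarrow> poly q z = z ^ n * cnj (poly p z)"
    and orth: "\<forall>k<n. ip nu (poly p) (\<lambda>z. z ^ k) = 0"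
  shows "\<And>k. 1 \<le> k \<Longrightarrow> k \<le> n \<Longrightarrow> ip nu (poly q) (\<lambda>z. z ^ k) = 0"
    and "ip nu (poly q) (\<lambda>z. 1) = ip nu (poly p) (poly p)"
    and "ip nu (poly p) (poly p) \<noteq> 0"
    and "ip nu (poly p) (poly p) = of_real (Re (ip nu (poly p) (poly p)))"
    and "ip nu (poly q) (\<lambda>z. z ^ Suc n) = cnj (ip nu (\<lambda>z. z * poly p z) (\<lambda>z. 1))"
    and "ip nu (poly p) (poly p) = ip nu (poly p) (\<lambda>z. z ^ n)"
proof -
  have p0: "p \<noteq> 0" using cp by auto
  show B: "ip nu (poly q) (\<lambda>z. z ^ k) = 0" if "1 \<le> k" "k \<le> n" for k
  proof -
    have "ip nu (poly q) (\<lambda>z. z ^ k) = (\<integral>z. cnj (poly p z * cnj (z ^ (n - k))) \<partial>nu)"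
      by (rule circ_eq) (use circq circ_pow[OF _ that(2)] in \<open>auto intro!: continuous_intros simp: mult_ac\<close>)
    also have "\<dots> = cnj (ip nu (poly p) (\<lambda>z. z ^ (n - k)))"
      unfolding ip_def by (rule Bochner_Integration.integral_cnj)
    also have "\<dots> = 0" using orth that by simp
    finally show ?thesis .
  qed
  show N: "ip nu (poly p) (poly p) = ip nu (poly p) (\<lambda>z. z ^ n)"
  proof -
    have "ip nu (poly p) (poly p) = (\<Sum>i\<le>n. cnj (coeff p i) * ip nu (poly p) (\<lambda>z. z ^ i))"
      using ip_poly_expand[of "poly p" p] dp by (simp add: continuous_intros)
    also have "\<dots> = cnj (coeff p n) * ip nu (poly p) (\<lambda>z. z ^ n) + (\<Sum>i\<in>{..n}-{n}. cnj (coeff p i) * ip nu (poly p) (\<lambda>z. z ^ i))"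
      by (rule sum.remove) auto
    also have "(\<Sum>i\<in>{..n}-{n}. cnj (coeff p i) * ip nu (poly p) (\<lambda>z. z ^ i)) = 0"
      by (rule sum.neutral) (use orth in auto)
    finally show ?thesis using cp by simp
  qed
  have np: "ip nu (poly p) (poly p) = of_real (\<integral>z. cmod (poly p z) ^ 2 \<partial>nu)"
    "(\<integral>z. cmod (poly p z) ^ 2 \<partial>nu) > 0" using norm_pos[OF p0] by auto
  show real: "ip nu (poly p) (poly p) = of_real (Re (ip nu (poly p) (poly p)))" using np by simp
  show "ip nu (poly p) (poly p) \<noteq> 0" using np by auto
  have "ip nu (poly q) (\<lambda>z. 1) = (\<integral>z. cnj (poly p z * cnj (z ^ n)) \<partial>nu)"
    by (rule circ_eq) (use circq in \<open>auto intro!: continuous_intros simp: mult_ac\<close>)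
  also have "\<dots> = cnj (ip nu (poly p) (\<lambda>z. z ^ n))"
    unfolding ip_def by (rule Bochner_Integration.integral_cnj)
  also have "\<dots> = ip nu (poly p) (poly p)" unfolding N[symmetric] using real
    by (metis complex_cnj_complex_of_real)
  finally show "ip nu (poly q) (\<lambda>z. 1) = ip nu (poly p) (poly p)" .
  have "ip nu (poly q) (\<lambda>z. z ^ Suc n) = (\<integral>z. cnj (z * poly p z * cnj 1) \<partial>nu)"
  proof (rule circ_eq)
    fix z :: complex assume z: "cmod z = 1"
    then have z0: "z \<noteq> 0" by auto
    show "poly q z * cnj (z ^ Suc n) = cnj (z * poly p z * cnj 1)"
      using circq z z0 by (simp add: cnj_circ[OF z] power_inverse field_simps)
  qed (auto intro!: continuous_intros)
  also have "\<dots> = cnj (ip nu (\<lambda>z. z * poly p z) (\<lambda>z. 1))"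
    unfolding ip_def by (rule Bochner_Integration.integral_cnj)
  finally show "ip nu (poly q) (\<lambda>z. z ^ Suc n) = cnj (ip nu (\<lambda>z. z * poly p z) (\<lambda>z. 1))" .
qed

lemma ip_shift:
  assumes "continuous_on UNIV f"
  shows "ip nu (\<lambda>z. z * f z) (\<lambda>z. z ^ Suc m) = ip nu f (\<lambda>z. z ^ m)"
proof -
  have "ip nu (\<lambda>z. z * f z) (\<lambda>z. z ^ Suc m) = integral\<^sup>L nu (\<lambda>z. f z * cnj (z ^ m))"
  proof (rule circ_eq)
    fix z :: complex assume z: "cmod z = 1"
    then have z0: "z \<noteq> 0" by auto
    show "z * f z * cnj (z ^ Suc m) = f z * cnj (z ^ m)"
      using z0 by (simp add: cnj_circ[OF z] power_inverse field_simps)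
  qed (use assms in \<open>auto intro!: continuous_intros\<close>)
  then show ?thesis by (simp add: ip_def)
qed

lemma OP_props: "degree (Phi nu n) = n \<and> coeff (Phi nu n) n = 1 \<and> degree (Psi nu n) \<le> n \<and>
   coeff (Psi nu n) 0 = 1 \<and> (\<forall>z. cmod z = 1 \<longrightarrow> poly (Psi nu n) z = z ^ n * cnj (poly (Phi nu n) z)) \<and>
   (\<forall>k<n. ip nu (poly (Phi nu n)) (\<lambda>z. z ^ k) = 0)"
proof (induction n)
  case 0
  show ?case by (simp add: Phi0 Psi0)
next
  case (Suc n)
  define p where "p = Phi nu n"
  define q where "q = Psi nu n"
  define c where "c = sc nu n"
  have dp: "degree p = n" and cp: "coeff p n = 1" and dq: "degree q \<le> n" and cq0: "coeff q 0 = 1"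
    and circq: "\<forall>z. cmod z = 1 \<longrightarrow> poly q z = z ^ n * cnj (poly p z)"
    and orth: "\<forall>k<n. ip nu (poly p) (\<lambda>z. z ^ k) = 0"
    using Suc.IH by (simp_all add: p_def q_def)
  note S = step_props[OF dp cp dq circq orth]
  have c_eq: "c = ip nu (\<lambda>z. z * poly p z) (\<lambda>z. 1) / ip nu (poly q) (\<lambda>z. 1)"
    by (simp add: c_def sc_def p_def q_def)
  have qn0: "ip nu (poly q) (\<lambda>z. 1) \<noteq> 0" using S(2,3) by simp
  have p0: "p \<noteq> 0" using cp by auto
  have Ph: "Phi nu (Suc n) = pCons 0 p - smult c q" and Ps: "Psi nu (Suc n) = q - smult (cnj c) (pCons 0 p)"
    by (simp_all add: OPs_Suc p_def q_def c_def)
  have dpc: "degree (pCons 0 p) = Suc n" using degree_pCons_eq[OF p0] dp by simp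
  have dsq: "degree (- smult c q) < Suc n" using dq degree_smult_le[of c q] by simp
  have "degree (Phi nu (Suc n)) = Suc n"
    unfolding Ph diff_conv_add_uminus using degree_add_eq_left[of "- smult c q" "pCons 0 p"] dpc dsq by simp
  moreover have "coeff (Phi nu (Suc n)) (Suc n) = 1"
    unfolding Ph using cp coeff_eq_0[of q "Suc n"] dq by simp
  moreover have "degree (Psi nu (Suc n)) \<le> Suc n"
    unfolding Ps using dq dpc degree_smult_le[of "cnj c" "pCons 0 p"] by (intro degree_diff_le) auto
  moreover have "coeff (Psi nu (Suc n)) 0 = 1" unfolding Ps using cq0 by simp
  moreover have "\<forall>z. cmod z = 1 \<longrightarrow> poly (Psi nu (Suc n)) z = z ^ Suc n * cnj (poly (Phi nu (Suc n)) z)"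
  proof (intro allI impI)
    fix z :: complex assume z: "cmod z = 1"
    then have z0: "z \<noteq> 0" by auto
    show "poly (Psi nu (Suc n)) z = z ^ Suc n * cnj (poly (Phi nu (Suc n)) z)"
      unfolding Ph Ps using circq z z0 by (simp add: cnj_circ[OF z] power_inverse field_simps)
  qed
  moreover have "\<forall>k<Suc n. ip nu (poly (Phi nu (Suc n))) (\<lambda>z. z ^ k) = 0"
  proof (intro allI impI)
    fix k assume k: "k < Suc n"
    have PF: "poly (Phi nu (Suc n)) = (\<lambda>z. z * poly p z - c * poly q z)" unfolding Ph by (rule ext) simp
    have E: "ip nu (poly (Phi nu (Suc n))) (\<lambda>z. z ^ k) = ip nu (\<lambda>z. z * poly p z) (\<lambda>z. z ^ k) - c * ip nu (poly q) (\<lambda>z. z ^ k)"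
      unfolding PF ip_mult1[symmetric] by (rule ip_diff1) (intro continuous_intros)+
    show "ip nu (poly (Phi nu (Suc n))) (\<lambda>z. z ^ k) = 0"
    proof (cases k)
      case 0
      then show ?thesis unfolding E using qn0 c_eq by simp
    next
      case (Suc m)
      have "ip nu (\<lambda>z. z * poly p z) (\<lambda>z. z ^ k) = ip nu (poly p) (\<lambda>z. z ^ m)"
      proof -
        have "ip nu (\<lambda>z. z * poly p z) (\<lambda>z. z ^ k) = integral\<^sup>L nu (\<lambda>z. poly p z * cnj (z ^ m))"
        proof (rule circ_eq)
          fix z :: complex assume z: "cmod z = 1"
          then have z0: "z \<noteq> 0" by auto
          show "z * poly p z * cnj (z ^ k) = poly p z * cnj (z ^ m)"
            using z0 by (simp add: Suc cnj_circ[OF z] power_inverse field_simps)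
        qed (auto intro!: continuous_intros)
        then show ?thesis by (simp add: ip_def)
      qed
      then show ?thesis unfolding E using orth S(1)[of k] k Suc by simp
    qed
  qed
  ultimately show ?case by blast
qed

lemmas OPP = OP_props[THEN conjunct1] OP_props[THEN conjunct2, THEN conjunct1]
  OP_props[THEN conjunct2, THEN conjunct2, THEN conjunct1]
  OP_props[THEN conjunct2, THEN conjunct2, THEN conjunct2, THEN conjunct1]
  OP_props[THEN conjunct2, THEN conjunct2, THEN conjunct2, THEN conjunct2, THEN conjunct1]
  OP_props[THEN conjunct2, THEN conjunct2, THEN conjunct2, THEN conjunct2, THEN conjunct2]

lemmas SP = step_props[OF OPP(1) OPP(2) OPP(3) OPP(5) OPP(6)]

lemma monic_OP_eq: "monic_OP nu n = Phi nu n"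
  unfolding monic_OP_def
proof (rule the_equality)
  show "is_monic_OP nu n (Phi nu n)" using OPP[of n] by (simp add: is_monic_OP_def ip_def)
  fix p assume "is_monic_OP nu n p"
  then show "p = Phi nu n" using OPP[of n] by (intro uniq[of p n "Phi nu n"]) (auto simp: is_monic_OP_def ip_def)
qed

lemma verb_eq: "verblunsky nu n = cnj (sc nu n)"
  unfolding verblunsky_def monic_OP_eq OPs_Suc using OPP(4)[of n] by (simp add: poly_0_coeff_0)

lemma Phi_ne: "Phi nu n \<noteq> 0" using OPP(2)[of n] by auto

definition "Nn n = ip nu (poly (Phi nu n)) (poly (Phi nu n))"

lemma Nn_real: "Nn n = of_real (Re (Nn n))" and Nn_pos: "Re (Nn n) > 0"
  using norm_pos[OF Phi_ne, of n] unfolding Nn_def by auto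

lemma Nn_Suc: "Nn (Suc n) = (1 - of_real (cmod (sc nu n) ^ 2)) * Nn n"
proof -
  define p where "p = Phi nu n"
  define q where "q = Psi nu n"
  define c where "c = sc nu n"
  have PF: "poly (Phi nu (Suc n)) = (\<lambda>z. z * poly p z - c * poly q z)"
    by (rule ext) (simp add: poly_OPs_Suc p_def q_def c_def)
  have "Nn (Suc n) = ip nu (poly (Phi nu (Suc n))) (\<lambda>z. z ^ Suc n)" unfolding Nn_def by (rule SP(6))
  also have "\<dots> = ip nu (\<lambda>z. z * poly p z) (\<lambda>z. z ^ Suc n) - c * ip nu (poly q) (\<lambda>z. z ^ Suc n)"
    unfolding PF ip_mult1[symmetric] by (rule ip_diff1) (intro continuous_intros)+
  also have "ip nu (\<lambda>z. z * poly p z) (\<lambda>z. z ^ Suc n) = ip nu (poly p) (\<lambda>z. z ^ n)"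
  proof -
    have "ip nu (\<lambda>z. z * poly p z) (\<lambda>z. z ^ Suc n) = integral\<^sup>L nu (\<lambda>z. poly p z * cnj (z ^ n))"
    proof (rule circ_eq)
      fix z :: complex assume z: "cmod z = 1"
      then have z0: "z \<noteq> 0" by auto
      show "z * poly p z * cnj (z ^ Suc n) = poly p z * cnj (z ^ n)"
        using z0 by (simp add: cnj_circ[OF z] power_inverse field_simps)
    qed (auto intro!: continuous_intros)
    then show ?thesis by (simp add: ip_def)
  qed
  also have "\<dots> = Nn n" unfolding Nn_def p_def by (rule SP(6)[symmetric])
  also have "ip nu (poly q) (\<lambda>z. z ^ Suc n) = cnj (ip nu (\<lambda>z. z * poly p z) (\<lambda>z. 1))"
    unfolding p_def q_def by (rule SP(5))
  also have "ip nu (\<lambda>z. z * poly p z) (\<lambda>z. 1) = c * Nn n"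
    using SP(2)[of n] SP(3)[of n] unfolding c_def sc_def Nn_def p_def q_def by simp
  finally have "Nn (Suc n) = Nn n - c * cnj (c * Nn n)" .
  also have "\<dots> = Nn n - c * cnj c * Nn n" using Nn_real[of n]
    by (metis complex_cnj_complex_of_real complex_cnj_mult mult.assoc)
  also have "\<dots> = (1 - of_real (cmod c ^ 2)) * Nn n" unfolding complex_norm_square by (simp add: algebra_simps)
  finally show ?thesis by (simp add: c_def)
qed

lemma Phi_orth: "k \<noteq> m \<Longrightarrow> ip nu (poly (Phi nu k)) (poly (Phi nu m)) = 0"
proof -
  assume km: "k \<noteq> m"
  show ?thesis
  proof (cases "m < k")
    case True
    then show ?thesis using orth_poly[OF _ OPP(6)[of k], of "Phi nu m"] OPP(1)[of m]
      by (simp add: continuous_intros)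
  next
    case False
    then have "k < m" using km by simp
    then have "ip nu (poly (Phi nu m)) (poly (Phi nu k)) = 0"
      using orth_poly[OF _ OPP(6)[of m], of "Phi nu k"] OPP(1)[of k] by (simp add: continuous_intros)
    then show ?thesis by (subst ip_cnj) simp
  qed
qed

end

lemma one_pm_i_ne0: "1 + \<i> * complex_of_real x \<noteq> 0" "1 - \<i> * complex_of_real x \<noteq> 0"
  by (simp_all add: complex_eq_iff)

lemma cc_ne0: "1 + complex_of_real x * complex_of_real x \<noteq> 0"
  "t \<noteq> 0 \<Longrightarrow> t + t * (complex_of_real x * complex_of_real x) \<noteq> 0"
proof -
  have "x * x \<ge> 0" by simp
  then have "1 + x * x \<noteq> 0" by linarith
  then show *: "1 + complex_of_real x * complex_of_real x \<noteq> 0"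
    by (metis of_real_1 of_real_add of_real_eq_0_iff of_real_mult)
  show "t \<noteq> 0 \<Longrightarrow> t + t * (complex_of_real x * complex_of_real x) \<noteq> 0"
    using * by (metis mult.right_neutral mult_eq_0_iff distrib_left)
qed

lemma alg_ratio: "(1::real) - m \<noteq> 0 \<Longrightarrow> q \<noteq> 0 \<Longrightarrow> p * N * (4 * m ^ 2 / q) = p * m / (1 - m) * (4 * m * (1 - m) / q * N)"
  by (simp add: field_simps power2_eq_square)

lemma alg_sc: "(q::real) > 0 \<Longrightarrow> q = 1 + c ^ 2 \<Longrightarrow> 1 - ((1 - 2 * m) ^ 2 + c ^ 2) / q = 4 * m * (1 - m) / q"
  by (simp add: field_simps power2_eq_square)

lemma alg_P1: "(t::complex) \<noteq> 0 \<Longrightarrow> P - t * a * (P / t) = P * (1 - a)"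
  by (simp add: field_simps)

lemma alg_P2: "1 + \<i> * complex_of_real x \<noteq> 0 \<Longrightarrow>
  1 - (1 - 2 * complex_of_real m + \<i> * complex_of_real x) / (1 + \<i> * complex_of_real x) = 2 * complex_of_real m / (1 + \<i> * complex_of_real x)"
  by (simp add: field_simps)

lemma cmod_ratio: "cmod ((1 - \<i> * complex_of_real x) / (1 + \<i> * complex_of_real x)) = 1"
proof -
  have "1 - \<i> * complex_of_real x = cnj (1 + \<i> * complex_of_real x)" by simp
  then show ?thesis using one_pm_i_ne0[of x] by (simp add: norm_divide del: complex_cnj_add)
qed

lemma tau_norm: "cmod (tau c n) = 1"
proof (induction n)
  case (Suc n)
  have "tau c (Suc n) = tau c n * ((1 - \<i> * complex_of_real (c (Suc n))) / (1 + \<i> * complex_of_real (c (Suc n))))"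
    by simp
  then show ?case by (simp only: norm_mult cmod_ratio Suc.IH)
qed simp

lemma tau_ne0: "tau c n \<noteq> 0" using tau_norm[of c n] by auto

lemma tau_cnj: "cnj (tau c n) = inverse (tau c n)" using cnj_circ[OF tau_norm] .

fun Rn :: "(nat \<Rightarrow> real) \<Rightarrow> (nat \<Rightarrow> real) \<Rightarrow> nat \<Rightarrow> complex \<Rightarrow> complex" where
  "Rn c d 0 z = 1"
| "Rn c d (Suc 0) z = ((1 + \<i> * of_real (c 1)) * z + (1 - \<i> * of_real (c 1))) / 2"
| "Rn c d (Suc (Suc n)) z = ((1 + \<i> * of_real (c (Suc (Suc n)))) * z + (1 - \<i> * of_real (c (Suc (Suc n))))) / 2 * Rn c d (Suc n) z
     - of_real (d (Suc (Suc n))) * z * Rn c d n z"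

fun an :: "(nat \<Rightarrow> real) \<Rightarrow> nat \<Rightarrow> complex" where
  "an c 0 = 1"
| "an c (Suc n) = an c n * (1 + \<i> * of_real (c (Suc n))) / 2"

fun PnC :: "(nat \<Rightarrow> real) \<Rightarrow> (nat \<Rightarrow> real) \<Rightarrow> nat \<Rightarrow> complex \<Rightarrow> complex" where
  "PnC c d 0 x = 1"
| "PnC c d (Suc 0) x = x - of_real (c 1)"
| "PnC c d (Suc (Suc n)) x =
     (x - of_real (c (n + 2))) * PnC c d (Suc n) x - of_real (d (n + 2)) * (x\<^sup>2 + 1) * PnC c d n x"

lemma PnC_real: "of_real (Pn c d n x) = PnC c d n (of_real x)"
  by (induction c d n x rule: Pn.induct) simp_all

lemma cont_Rn: "continuous_on UNIV (Rn c d n)"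
proof -
  have "continuous_on UNIV (Rn c d n) \<and> continuous_on UNIV (Rn c d (Suc n))"
  proof (induction n)
    case 0 then show ?case by (auto intro!: continuous_intros simp: o_def)
  next
    case (Suc n)
    then show ?case
      by (auto intro!: continuous_intros simp del: Rn.simps simp: Rn.simps(3)[abs_def])
  qed
  then show ?thesis by blast
qed

lemma cont_Pn: "continuous_on UNIV (Pn c d n)"
proof -
  have "continuous_on UNIV (Pn c d n) \<and> continuous_on UNIV (Pn c d (Suc n))"
  proof (induction n)
    case 0 then show ?case by (auto intro!: continuous_intros simp: o_def)
  next
    case (Suc n)
    then show ?case
      by (auto intro!: continuous_intros simp del: Pn.simps simp: Pn.simps(3)[abs_def])
  qed
  then show ?thesis by blast
qed

lemma gen_sq: "((w::complex)\<^sup>2 + 1) * s ^ 2 = (w * s) ^ 2 + s ^ 2"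
  by (simp add: power_mult_distrib algebra_simps)

lemma PR_gen: "z \<noteq> 1 \<Longrightarrow> w = \<i> * (z + 1) / (z - 1) \<Longrightarrow> PnC c d n w * (z - 1) ^ n = (2 * \<i>) ^ n * Rn c d n z"
proof (induction n rule: less_induct)
  case (less n)
  have z: "z \<noteq> 1" and wd: "w = \<i> * (z + 1) / (z - 1)" using less.prems by auto
  have s: "z - 1 \<noteq> 0" using z by simp
  have w1: "w * (z - 1) = \<i> * (z + 1)" using s wd by simp
  show ?case
  proof (cases n)
    case 0 then show ?thesis by simp
  next
    case (Suc m)
    show ?thesis
    proof (cases m)
      case 0
      have "(w - of_real (c 1)) * (z - 1) = \<i> * (z + 1) - of_real (c 1) * (z - 1)"
        using w1 by (simp add: algebra_simps)
      then show ?thesis using Suc 0 by (simp add: field_simps)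
    next
      case (Suc k)
      have IH1: "PnC c d (Suc k) w * (z - 1) ^ Suc k = (2 * \<i>) ^ Suc k * Rn c d (Suc k) z"
        using less.IH[of "Suc k"] \<open>n = Suc m\<close> Suc z wd by simp
      have IH0: "PnC c d k w * (z - 1) ^ k = (2 * \<i>) ^ k * Rn c d k z"
        using less.IH[of k] \<open>n = Suc m\<close> Suc z wd by simp
      have "(w - of_real (c (Suc (Suc k)))) * (z - 1) = \<i> * (z + 1) - of_real (c (Suc (Suc k))) * (z - 1)"
        using w1 by (simp add: algebra_simps)
      also have "\<dots> = 2 * \<i> * (((1 + \<i> * of_real (c (Suc (Suc k)))) * z + (1 - \<i> * of_real (c (Suc (Suc k))))) / 2)"
        by (simp add: field_simps)
      finally have e1: "(w - of_real (c (Suc (Suc k)))) * (z - 1) = 2 * \<i> * (((1 + \<i> * of_real (c (Suc (Suc k)))) * z + (1 - \<i> * of_real (c (Suc (Suc k))))) / 2)" .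
      have "(w\<^sup>2 + 1) * (z - 1) ^ 2 = (w * (z - 1)) ^ 2 + (z - 1) ^ 2"
        by (rule gen_sq)
      also have "\<dots> = (2 * \<i>) ^ 2 * z" unfolding w1 by (simp add: power2_eq_square algebra_simps)
      finally have e2: "(w\<^sup>2 + 1) * (z - 1) ^ 2 = (2 * \<i>) ^ 2 * z" .
      have "PnC c d n w * (z - 1) ^ n =
         ((w - of_real (c (Suc (Suc k)))) * (z - 1)) * (PnC c d (Suc k) w * (z - 1) ^ Suc k)
         - of_real (d (Suc (Suc k))) * ((w\<^sup>2 + 1) * (z - 1) ^ 2) * (PnC c d k w * (z - 1) ^ k)"
        unfolding \<open>n = Suc m\<close> Suc by (simp add: algebra_simps power2_eq_square)
      also have "\<dots> = (2 * \<i>) ^ n * Rn c d n z"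
        unfolding e1 e2 IH1 IH0 \<open>n = Suc m\<close> Suc by (simp add: algebra_simps power2_eq_square)
      finally show ?thesis .
    qed
  qed
qed

lemma PR: "z \<noteq> 1 \<Longrightarrow> PnC c d n (\<i> * (z + 1) / (z - 1)) * (z - 1) ^ n = (2 * \<i>) ^ n * Rn c d n z"
  using PR_gen by blast

fun piM :: "(nat \<Rightarrow> real) \<Rightarrow> nat \<Rightarrow> real" where
  "piM M 0 = 1"
| "piM M (Suc k) = piM M k * M (Suc k) / (1 - M (Suc k))"

locale main = circ +
  fixes c d M :: "nat \<Rightarrow> real"
  assumes pcs: "positive_chain_seq d"
    and mult: "has_multiple_param_seqs d"
    and maxM: "is_max_param_seq d M"
    and hyp: "\<forall>n\<ge>1. verblunsky nu (n - 1) =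
           (1 / tau c (n - 1)) * ((1 - 2 * of_real (M n) - \<i> * of_real (c n)) / (1 - \<i> * of_real (c n)))"
begin

lemma verb: "verblunsky nu m = (1 / tau c m) * ((1 - 2 * of_real (M (Suc m)) - \<i> * of_real (c (Suc m))) / (1 - \<i> * of_real (c (Suc m))))"
  using hyp[rule_format, of "Suc m"] by simp

lemma sc_eq: "sc nu m = tau c m * ((1 - 2 * of_real (M (Suc m)) + \<i> * of_real (c (Suc m))) / (1 + \<i> * of_real (c (Suc m))))"
proof -
  have "sc nu m = cnj (verblunsky nu m)" by (simp add: verb_eq)
  also have "\<dots> = cnj (inverse (tau c m)) * ((1 - 2 * of_real (M (Suc m)) + \<i> * of_real (c (Suc m))) / (1 + \<i> * of_real (c (Suc m))))"
    unfolding verb by (simp add: divide_inverse)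
  also have "cnj (inverse (tau c m)) = tau c m" using tau_cnj[of c m] tau_ne0[of c m]
    by (metis complex_cnj_cnj complex_cnj_inverse inverse_inverse_eq)
  finally show ?thesis .
qed

lemma Mprops: "is_param_seq d M" "\<forall>g. is_param_seq d g \<longrightarrow> (\<forall>n\<ge>1. g n \<le> M n)"
  using maxM by (auto simp: is_max_param_seq_def)

lemma param_unique:
  assumes "is_param_seq d g" "is_param_seq d h" "g 1 = h 1"
  shows "n \<ge> 1 \<Longrightarrow> g n = h n"
proof (induction n rule: nat_induct_at_least)
  case base then show ?case using assms(3) by simp
next
  case (Suc n)
  have "d (n + 1) = (1 - g n) * g (n + 1)" "d (n + 1) = (1 - h n) * h (n + 1)"
    using assms(1,2) Suc.hyps by (auto simp: is_param_seq_def)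
  moreover have "g n < 1"
    using assms(1) Suc.hyps by (cases "n = 1") (auto simp: is_param_seq_def)
  ultimately show ?case using Suc.IH by simp
qed

lemma M1_pos: "M 1 > 0"
proof -
  obtain g h n where gh: "is_param_seq d g" "is_param_seq d h" and n: "n \<ge> 1" "g n \<noteq> h n"
    using mult unfolding has_multiple_param_seqs_def by blast
  have "g 1 \<noteq> h 1" using param_unique[OF gh] n by blast
  moreover have "g 1 \<ge> 0" "h 1 \<ge> 0" using gh by (auto simp: is_param_seq_def)
  moreover have "g 1 \<le> M 1" "h 1 \<le> M 1" using Mprops(2) gh by auto
  ultimately show ?thesis by linarith
qed

lemma M_bounds: "n \<ge> 1 \<Longrightarrow> 0 < M n \<and> M n < 1"
  using Mprops(1) M1_pos by (cases "n = 1") (auto simp: is_param_seq_def)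

lemma d_eq: "n \<ge> 1 \<Longrightarrow> d (n + 1) = (1 - M n) * M (n + 1)"
  using Mprops(1) by (auto simp: is_param_seq_def)

lemma M_bounds': "0 < M (Suc n)" "M (Suc n) < 1" using M_bounds[of "Suc n"] by auto

lemma sc_cmod2: "cmod (sc nu k) ^ 2 = ((1 - 2 * M (Suc k)) ^ 2 + c (Suc k) ^ 2) / (1 + c (Suc k) ^ 2)"
proof -
  have "cmod (sc nu k) = cmod ((1 - 2 * of_real (M (Suc k)) + \<i> * of_real (c (Suc k))) / (1 + \<i> * of_real (c (Suc k))))"
    unfolding sc_eq norm_mult tau_norm by simp
  also have "\<dots> = cmod (1 - 2 * of_real (M (Suc k)) + \<i> * of_real (c (Suc k))) / cmod (1 + \<i> * of_real (c (Suc k)))"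
    by (rule norm_divide)
  finally show ?thesis by (simp add: cmod_power2 power_divide)
qed

lemma Phi1_step: "poly (Psi nu k) 1 = poly (Phi nu k) 1 / tau c k \<Longrightarrow>
   poly (Phi nu (Suc k)) 1 = poly (Phi nu k) 1 * (2 * of_real (M (Suc k)) / (1 + \<i> * of_real (c (Suc k))))"
proof -
  assume Q: "poly (Psi nu k) 1 = poly (Phi nu k) 1 / tau c k"
  have "poly (Phi nu (Suc k)) 1 = poly (Phi nu k) 1 - tau c k * ((1 - 2 * of_real (M (Suc k)) + \<i> * of_real (c (Suc k))) / (1 + \<i> * of_real (c (Suc k)))) * (poly (Phi nu k) 1 / tau c k)"
    unfolding poly_OPs_Suc Q sc_eq by simp
  also have "\<dots> = poly (Phi nu k) 1 * (1 - (1 - 2 * of_real (M (Suc k)) + \<i> * of_real (c (Suc k))) / (1 + \<i> * of_real (c (Suc k))))"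
    by (rule alg_P1[OF tau_ne0])
  finally show ?thesis using alg_P2[OF one_pm_i_ne0(1)] by simp
qed

lemma Phi1: "cnj (poly (Phi nu k) 1) = poly (Phi nu k) 1 / tau c k \<and>
   poly (Phi nu (Suc k)) 1 = poly (Phi nu k) 1 * (2 * of_real (M (Suc k)) / (1 + \<i> * of_real (c (Suc k))))"
proof (induction k)
  case 0
  then show ?case using Phi1_step[of 0] by (simp add: Phi0 Psi0)
next
  case (Suc k)
  let ?P = "poly (Phi nu k) 1"
  have e: "poly (Phi nu (Suc k)) 1 = ?P * (2 * of_real (M (Suc k)) / (1 + \<i> * of_real (c (Suc k))))"
    using Suc.IH by blast
  have "cnj (poly (Phi nu (Suc k)) 1) = cnj ?P * (2 * of_real (M (Suc k)) / (1 - \<i> * of_real (c (Suc k))))"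
    unfolding e by simp
  also have "\<dots> = ?P / tau c k * (2 * of_real (M (Suc k)) / (1 - \<i> * of_real (c (Suc k))))"
    using Suc.IH by simp
  also have "\<dots> = poly (Phi nu (Suc k)) 1 / tau c (Suc k)"
    unfolding e using one_pm_i_ne0[of "c (Suc k)"] tau_ne0[of c k] cc_ne0(2)[OF tau_ne0[of c k], of "c (Suc k)"]
    by (simp add: field_simps)
  finally have A: "cnj (poly (Phi nu (Suc k)) 1) = poly (Phi nu (Suc k)) 1 / tau c (Suc k)" .
  have Q: "poly (Psi nu (Suc k)) 1 = poly (Phi nu (Suc k)) 1 / tau c (Suc k)"
    using OPP(5)[of "Suc k"] A by simp
  show ?case using A Phi1_step[OF Q] by blast
qed

lemma piM_pos: "piM M k > 0"
  by (induction k) (use M_bounds' in auto)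

lemma Nn_re_Suc: "Re (Nn (Suc k)) = (1 - cmod (sc nu k) ^ 2) * Re (Nn k)"
  unfolding Nn_Suc by simp

lemma ratio: "cmod (poly (Phi nu k) 1) ^ 2 = piM M k * Re (Nn k)"
proof (induction k)
  case 0
  have "Re (Nn 0) = 1"
    unfolding Nn_def ip_def Phi0 using prob_space.prob_space[OF prob] by (simp add: prob_space.prob_space)
  then show ?case by (simp add: Phi0)
next
  case (Suc k)
  let ?m = "M (Suc k)" and ?c = "c (Suc k)"
  have m: "0 < ?m" "?m < 1" using M_bounds' by auto
  have c1: "1 + ?c ^ 2 > 0" by (simp add: add_pos_nonneg)
  have "cmod (poly (Phi nu (Suc k)) 1) ^ 2 = cmod (poly (Phi nu k) 1) ^ 2 * (4 * ?m ^ 2 / (1 + ?c ^ 2))"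
    using Phi1[of k] by (simp add: norm_mult norm_divide power_mult_distrib power_divide cmod_power2)
  also have "\<dots> = piM M (Suc k) * ((1 - cmod (sc nu k) ^ 2) * Re (Nn k))"
  proof -
    have s: "1 - cmod (sc nu k) ^ 2 = 4 * ?m * (1 - ?m) / (1 + ?c ^ 2)"
      unfolding sc_cmod2 using c1 by (intro alg_sc) auto
    show ?thesis unfolding s Suc.IH piM.simps using m c1 by (intro alg_ratio) auto
  qed
  finally show ?case unfolding Nn_re_Suc .
qed

lemma space_nu: "space nu = UNIV"
  using sets_eq_imp_space_eq[OF sets_nu] by simp

lemma one_sets: "{1} \<in> sets nu" unfolding sets_nu by simp

lemma christ: "measure nu {1} * (\<Sum>k\<le>n. piM M k) ^ 2 \<le> (\<Sum>k\<le>n. piM M k)"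
proof -
  define P where "P k = poly (Phi nu k) 1" for k
  define w where "w k = cnj (P k) / of_real (Re (Nn k))" for k
  define pz where "pz = (\<lambda>z. \<Sum>k\<le>n. w k * poly (Phi nu k) z)"
  let ?K = "\<Sum>k\<le>n. piM M k"
  have cpz: "continuous_on UNIV pz" unfolding pz_def by (intro continuous_intros)
  have wN: "w k * Nn k = cnj (P k)" for k
    unfolding w_def using Nn_real[of k] Nn_pos[of k]
    by (metis divide_eq_eq less_numeral_extra(3) of_real_eq_0_iff)
  have wP: "w k * P k = of_real (piM M k)" for k
  proof -
    have "w k * P k = of_real (cmod (P k) ^ 2) / of_real (Re (Nn k))"
      unfolding w_def complex_norm_square by (simp add: mult.commute)
    also have "\<dots> = of_real (piM M k)" using ratio[of k] Nn_pos[of k] unfolding P_def by simp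
    finally show ?thesis .
  qed
  have p1: "pz 1 = of_real ?K" unfolding pz_def using wP by (simp add: P_def)
  have ipm: "ip nu pz (poly (Phi nu m)) = cnj (P m)" if "m \<le> n" for m
  proof -
    have "ip nu pz (poly (Phi nu m)) = cnj (ip nu (poly (Phi nu m)) pz)" by (rule ip_cnj)
    also have "ip nu (poly (Phi nu m)) pz = (\<Sum>k\<le>n. cnj (w k) * ip nu (poly (Phi nu m)) (poly (Phi nu k)))"
      unfolding pz_def by (rule ip_sum2) (auto intro!: continuous_intros)
    also have "\<dots> = (\<Sum>k\<le>n. if k = m then cnj (w m) * Nn m else 0)"
      by (rule sum.cong) (auto simp: Phi_orth Nn_def)
    also have "\<dots> = cnj (w m) * Nn m" using that by simp
    finally show ?thesis using Nn_real[of m] wN[of m]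
      by (metis complex_cnj_cnj complex_cnj_complex_of_real complex_cnj_mult)
  qed
  have "ip nu pz pz = ip nu pz (\<lambda>z. \<Sum>k\<le>n. w k * poly (Phi nu k) z)" by (simp only: pz_def)
  also have "\<dots> = (\<Sum>m\<le>n. cnj (w m) * ip nu pz (poly (Phi nu m)))"
    by (rule ip_sum2) (auto intro!: continuous_intros cpz)
  also have "\<dots> = (\<Sum>m\<le>n. of_real (piM M m))"
  proof (rule sum.cong)
    fix m assume "m \<in> {..n}"
    then have "cnj (w m) * ip nu pz (poly (Phi nu m)) = cnj (w m * P m)" using ipm by simp
    also have "\<dots> = of_real (piM M m)" using wP[of m] by simp
    finally show "cnj (w m) * ip nu pz (poly (Phi nu m)) = of_real (piM M m)" .
  qed simp
  finally have ipp: "ip nu pz pz = of_real ?K" by simp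
  have "ip nu pz pz = of_real (\<integral>z. cmod (pz z) ^ 2 \<partial>nu)"
    unfolding ip_def complex_norm_square[symmetric] by (rule integral_complex_of_real)
  then have intK: "(\<integral>z. cmod (pz z) ^ 2 \<partial>nu) = ?K" using ipp by (metis of_real_eq_iff)
  have Kn: "?K \<ge> 0" using piM_pos by (simp add: sum_nonneg less_imp_le)
  have "measure nu {1} * ?K ^ 2 = (\<integral>z. indicator {1} z * cmod (pz 1) ^ 2 \<partial>nu)"
  proof -
    have "cmod (pz 1) = ?K" using p1 Kn by (simp only: norm_of_real)
    then show ?thesis using space_nu by simp
  qed
  also have "\<dots> \<le> (\<integral>z. cmod (pz z) ^ 2 \<partial>nu)"
  proof (rule integral_mono)
    show "integrable nu (\<lambda>z. indicator {1} z * cmod (pz 1) ^ 2)"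
      using one_sets finite_measure.emeasure_finite[OF prob_space.finite_measure[OF prob]] by (intro integrable_mult_left) (auto simp: less_top)
    show "integrable nu (\<lambda>z. cmod (pz z) ^ 2)" by (intro int_cont continuous_intros cpz)
  qed (auto simp: indicator_def)
  finally show ?thesis using intK by simp
qed

lemma piM_unbounded: "\<exists>n. (\<Sum>k\<le>n. piM M k) > B"
proof (rule ccontr)
  assume "\<not> ?thesis"
  then have H: "(\<Sum>k\<le>n. piM M k) \<le> B" for n by (simp add: not_less)
  define S where "S n = (\<Sum>k\<in>{1..<n}. piM M k)" for n
  define T where "T n = B + 1 - S n" for n
  have Sle: "S n \<le> B" for n
  proof -
    have "S n \<le> (\<Sum>k\<le>n. piM M k)" unfolding S_def
      by (rule sum_mono2) (auto intro: less_imp_le piM_pos)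
    then show ?thesis using H[of n] by simp
  qed
  have Tpos: "T n > 0" for n using Sle[of n] by (simp add: T_def)
  have TSuc: "n \<ge> 1 \<Longrightarrow> T (Suc n) = T n - piM M n" for n
    by (simp add: T_def S_def)
  define h where "h n = M n + piM M n * (1 - M n) / T n" for n
  have h1: "1 - h n = (1 - M n) * T (Suc n) / T n" if "n \<ge> 1" for n
    unfolding h_def TSuc[OF that] using Tpos[of n] by (simp add: field_simps)
  have h2: "h (Suc n) = M (Suc n) * T n / T (Suc n)" if "n \<ge> 1" for n
  proof -
    have m: "M (Suc n) < 1" using M_bounds' by auto
    have e: "T n = T (Suc n) + piM M n" using TSuc[OF that] by simp
    have m1: "1 - M (Suc n) \<noteq> 0" using m by simp
    show ?thesis unfolding h_def piM.simps e using Tpos[of "Suc n"] m1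
      by (simp add: field_simps)
  qed
  have hb: "0 < h n \<and> h n < 1" if "n \<ge> 1" for n
  proof -
    have "M n > 0" "M n < 1" using M_bounds that by auto
    then have "h n > 0" unfolding h_def using piM_pos[of n] Tpos[of n] by (simp add: add_pos_nonneg)
    moreover have "1 - h n > 0" unfolding h1[OF that] using Tpos \<open>M n < 1\<close> by simp
    ultimately show ?thesis by simp
  qed
  have "is_param_seq d h"
    unfolding is_param_seq_def
  proof (intro conjI allI impI)
    show "0 \<le> h 1" "h 1 < 1" using hb[of 1] by auto
    show "0 < h n" "h n < 1" if "2 \<le> n" for n using hb[of n] that by auto
    show "d (n + 1) = (1 - h n) * h (n + 1)" if "1 \<le> n" for n
      unfolding d_eq[OF that] h1[OF that] using h2[OF that] Tpos[of n] Tpos[of "Suc n"] by simp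
  qed
  then have "h 1 \<le> M 1" using Mprops(2) by auto
  moreover have "h 1 > M 1" unfolding h_def using piM_pos[of 1] Tpos[of 1] M_bounds[of 1] by simp
  ultimately show False by simp
qed

lemma mass1: "measure nu {1} = 0"
proof (rule ccontr)
  assume ne: "measure nu {1} \<noteq> 0"
  then have m: "measure nu {1} > 0" using measure_nonneg[of nu "{1}"] by linarith
  obtain n where n: "(\<Sum>k\<le>n. piM M k) > 1 / measure nu {1}" using piM_unbounded by blast
  let ?K = "\<Sum>k\<le>n. piM M k"
  have Kp: "?K > 0" using m n by (smt (verit) divide_pos_pos)
  have "measure nu {1} * ?K * ?K \<le> ?K" using christ[of n] by (simp add: power2_eq_square mult.assoc)
  then have "measure nu {1} * ?K \<le> 1" using Kp by (simp add: mult_le_cancel_right1)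
  then have "?K \<le> 1 / measure nu {1}" using m by (simp add: field_simps)
  then show False using n by simp
qed

lemma AE_ne1: "AE z in nu. z \<noteq> 1"
proof -
  have "{1} \<in> null_sets nu"
    using one_sets mass1 finite_measure.emeasure_eq_measure[OF prob_space.finite_measure[OF prob]] by (auto simp: null_sets_def)
  then show ?thesis using AE_not_in by fastforce
qed

definition "Xf n z = z * poly (Phi nu n) z - tau c n * poly (Psi nu n) z"

lemma sc_cnj: "cnj (sc nu m) = inverse (tau c m) * ((1 - 2 * of_real (M (Suc m)) - \<i> * of_real (c (Suc m))) / (1 - \<i> * of_real (c (Suc m))))"
  using verb[of m] by (simp add: verb_eq divide_inverse)

lemma X_Suc: "Xf (Suc n) z = (z * ((1 + \<i> * of_real (c (Suc n))) * z + (1 - 2 * of_real (M (Suc n)) - \<i> * of_real (c (Suc n)))) * poly (Phi nu n) z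
   - tau c n * ((1 - 2 * of_real (M (Suc n)) + \<i> * of_real (c (Suc n))) * z + (1 - \<i> * of_real (c (Suc n)))) * poly (Psi nu n) z) / (1 + \<i> * of_real (c (Suc n)))"
  unfolding Xf_def poly_OPs_Suc unfolding sc_cnj unfolding sc_eq tau.simps(2)
  by (rule alg_X[OF tau_ne0 one_pm_i_ne0])

lemma Y_Suc: "poly (Phi nu (Suc n)) z - tau c (Suc n) * poly (Psi nu (Suc n)) z = 2 * (1 - of_real (M (Suc n))) / (1 + \<i> * of_real (c (Suc n))) * Xf n z"
  unfolding Xf_def poly_OPs_Suc unfolding sc_cnj unfolding sc_eq tau.simps(2)
  by (rule alg_Y[OF tau_ne0 one_pm_i_ne0])

lemma RX: "(z - 1) * Rn c d n z = an c n * Xf n z"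
proof (induction n rule: less_induct)
  case (less n)
  show ?case
  proof (cases n)
    case 0 then show ?thesis by (simp add: Xf_def Phi0 Psi0)
  next
    case (Suc m)
    show ?thesis
    proof (cases m)
      case 0
      show ?thesis unfolding Suc 0 X_Suc[of 0] using alg_base[OF one_pm_i_ne0(1)]
        by (simp add: Phi0 Psi0)
    next
      case (Suc k)
      let ?x1 = "complex_of_real (c (Suc k))" and ?x2 = "complex_of_real (c (Suc (Suc k)))"
      let ?m1 = "complex_of_real (M (Suc k))" and ?m2 = "complex_of_real (M (Suc (Suc k)))"
      let ?F = "poly (Phi nu (Suc k)) z" and ?G = "poly (Psi nu (Suc k)) z"
      have IH1: "(z - 1) * Rn c d (Suc k) z = an c (Suc k) * Xf (Suc k) z"
        using less.IH[of "Suc k"] \<open>n = Suc m\<close> Suc by simp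
      have IH0: "(z - 1) * Rn c d k z = an c k * Xf k z"
        using less.IH[of k] \<open>n = Suc m\<close> Suc by simp
      have dd: "complex_of_real (d (Suc (Suc k))) = (1 - ?m1) * ?m2"
        using d_eq[of "Suc k"] by simp
      have Y: "an c (Suc k) * (?F - tau c (Suc k) * ?G) = (1 - ?m1) * (an c k * Xf k z)"
        unfolding Y_Suc an.simps by (rule cancel_b2[OF one_pm_i_ne0(1)])
      have "(z - 1) * Rn c d n z = ((1 + \<i> * ?x2) * z + (1 - \<i> * ?x2)) / 2 * ((z - 1) * Rn c d (Suc k) z)
          - complex_of_real (d (Suc (Suc k))) * z * ((z - 1) * Rn c d k z)"
        unfolding \<open>n = Suc m\<close> Suc by (simp add: algebra_simps)
      also have "\<dots> = ((1 + \<i> * ?x2) * z + (1 - \<i> * ?x2)) / 2 * (an c (Suc k) * (z * ?F - tau c (Suc k) * ?G))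
          - ?m2 * z * (an c (Suc k) * (?F - tau c (Suc k) * ?G))"
        unfolding IH1 IH0 Y dd by (simp add: Xf_def algebra_simps)
      also have "\<dots> = an c (Suc k) * (1 + \<i> * ?x2) / 2 * ((z * ((1 + \<i> * ?x2) * z + (1 - 2 * ?m2 - \<i> * ?x2)) * ?F - tau c (Suc k) * ((1 - 2 * ?m2 + \<i> * ?x2) * z + (1 - \<i> * ?x2)) * ?G) / (1 + \<i> * ?x2))"
        by (rule alg_step[symmetric, OF one_pm_i_ne0(1)])
      also have "\<dots> = an c n * Xf n z"
        unfolding \<open>n = Suc m\<close> Suc X_Suc[of "Suc k"] by simp
      finally show ?thesis .
    qed
  qed
qed

lemma cXf: "continuous_on UNIV (Xf n)"
  unfolding Xf_def[abs_def] by (intro continuous_intros)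

lemma R_step:
  assumes k: "k < n"
  shows "ip nu (Rn c d n) (\<lambda>z. z ^ k) = ip nu (Rn c d n) (\<lambda>z. z ^ Suc k)"
proof -
  have cR: "continuous_on UNIV (Rn c d n)" by (rule cont_Rn)
  have "ip nu (\<lambda>z. (z - 1) * Rn c d n z) (\<lambda>z. z ^ Suc k) =
      integral\<^sup>L nu (\<lambda>z. Rn c d n z * cnj (z ^ k) - Rn c d n z * cnj (z ^ Suc k))"
  proof (rule circ_eq)
    fix z :: complex assume z: "cmod z = 1"
    then have z0: "z \<noteq> 0" by auto
    show "(z - 1) * Rn c d n z * cnj (z ^ Suc k) = Rn c d n z * cnj (z ^ k) - Rn c d n z * cnj (z ^ Suc k)"
      using z0 by (simp add: cnj_circ[OF z] power_inverse field_simps)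
  qed (use cR in \<open>auto intro!: continuous_intros\<close>)
  also have "\<dots> = ip nu (Rn c d n) (\<lambda>z. z ^ k) - ip nu (Rn c d n) (\<lambda>z. z ^ Suc k)"
    unfolding ip_def by (rule Bochner_Integration.integral_diff) (use cR in \<open>auto intro!: int_cont continuous_intros\<close>)
  finally have A: "ip nu (\<lambda>z. (z - 1) * Rn c d n z) (\<lambda>z. z ^ Suc k) = ip nu (Rn c d n) (\<lambda>z. z ^ k) - ip nu (Rn c d n) (\<lambda>z. z ^ Suc k)" .
  have fe: "(\<lambda>z. (z - 1) * Rn c d n z) = (\<lambda>z. an c n * Xf n z)" using RX by auto
  have xe: "Xf n = (\<lambda>z. z * poly (Phi nu n) z - tau c n * poly (Psi nu n) z)" by (rule ext) (simp add: Xf_def)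
  have "ip nu (Xf n) (\<lambda>z. z ^ Suc k) = ip nu (\<lambda>z. z * poly (Phi nu n) z) (\<lambda>z. z ^ Suc k) - tau c n * ip nu (poly (Psi nu n)) (\<lambda>z. z ^ Suc k)"
    unfolding xe ip_mult1[symmetric] by (rule ip_diff1) (intro continuous_intros)+
  also have "\<dots> = 0" unfolding ip_shift[OF continuous_on_poly[OF continuous_on_id]]
    using OPP(6)[of n] k SP(1)[of "Suc k" n] by simp
  finally have B: "ip nu (\<lambda>z. (z - 1) * Rn c d n z) (\<lambda>z. z ^ Suc k) = 0"
    unfolding fe ip_mult1 by simp
  show ?thesis using A B by simp
qed

definition "In n = ip nu (Rn c d n) (\<lambda>z. 1)"

lemma R_mom: "k \<le> n \<Longrightarrow> ip nu (Rn c d n) (\<lambda>z. z ^ k) = In n"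
proof (induction k)
  case 0 then show ?case by (simp add: In_def)
next
  case (Suc k)
  then show ?case using R_step[of k n] by simp
qed

lemma R_poly: "degree q \<le> n \<Longrightarrow> ip nu (Rn c d n) (poly q) = In n * cnj (poly q 1)"
proof -
  assume dq: "degree q \<le> n"
  have "ip nu (Rn c d n) (poly q) = (\<Sum>i\<le>degree q. cnj (coeff q i) * ip nu (Rn c d n) (\<lambda>z. z ^ i))"
    by (rule ip_poly_expand[OF cont_Rn])
  also have "\<dots> = (\<Sum>i\<le>degree q. cnj (coeff q i) * In n)"
    by (rule sum.cong) (use dq R_mom in auto)
  also have "\<dots> = In n * cnj (poly q 1)"
    by (simp add: poly_altdef sum_distrib_left mult.commute)
  finally show ?thesis .
qed

lemma int1: "ip nu (\<lambda>z. 1) (\<lambda>z. 1) = 1"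
  unfolding ip_def using prob_space.prob_space[OF prob] by (simp add: prob_space.prob_space)

lemma In0: "In 0 = 1"
proof -
  have "Rn c d 0 = (\<lambda>z. 1)" by (rule ext) simp
  then show ?thesis unfolding In_def using int1 by simp
qed

lemma In1: "In 1 = 1 - of_real (M 1)"
proof -
  let ?A = "(1 + \<i> * of_real (c 1)) / 2" and ?B = "(1 - \<i> * of_real (c 1)) / 2"
  have Re: "Rn c d 1 = (\<lambda>z. ?A * z + ?B * 1)" by (rule ext) (simp add: field_simps)
  have "In 1 = ip nu (\<lambda>z. ?A * z) (\<lambda>z. 1) + ip nu (\<lambda>z. ?B * 1) (\<lambda>z. 1)"
    unfolding In_def Re by (rule ip_add1) (intro continuous_intros)+
  also have "\<dots> = ?A * ip nu (\<lambda>z. z) (\<lambda>z. 1) + ?B * ip nu (\<lambda>z. 1) (\<lambda>z. 1)"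
    by (simp only: ip_mult1)
  also have "ip nu (\<lambda>z. z) (\<lambda>z. 1) = sc nu 0"
  proof -
    have p1: "poly (1::complex poly) = (\<lambda>z. 1)" by (rule ext) simp
    show ?thesis unfolding sc_def Phi0 Psi0 p1 using int1 by simp
  qed
  also have "sc nu 0 = (1 - 2 * of_real (M 1) + \<i> * of_real (c 1)) / (1 + \<i> * of_real (c 1))"
    unfolding sc_eq by simp
  also have "?A * \<dots> = (1 - 2 * of_real (M 1) + \<i> * of_real (c 1)) / 2"
    by (rule cancel_b3[OF one_pm_i_ne0(1)])
  finally have e: "In 1 = (1 - 2 * of_real (M 1) + \<i> * of_real (c 1)) / 2 + (1 - \<i> * of_real (c 1)) / 2"
    using int1 by simp
  have g: "(1 - 2 * m + \<i> * x) / 2 + (1 - \<i> * x) / 2 = 1 - (m::complex)" for m x by (simp add: field_simps)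
  show ?thesis unfolding e g ..
qed

lemma In_rec: "In (Suc (Suc n)) = In (Suc n) - of_real (d (Suc (Suc n))) * In n"
proof -
  let ?A = "(1 + \<i> * of_real (c (Suc (Suc n)))) / 2" and ?B = "(1 - \<i> * of_real (c (Suc (Suc n)))) / 2"
  let ?D = "complex_of_real (d (Suc (Suc n)))"
  let ?R1 = "Rn c d (Suc n)" and ?R0 = "Rn c d n"
  have c1: "continuous_on UNIV ?R1" "continuous_on UNIV ?R0" by (rule cont_Rn)+
  have "In (Suc (Suc n)) = ip nu (Rn c d (Suc (Suc n))) (\<lambda>z. z ^ 1)" using R_mom[of 1 "Suc (Suc n)"] by simp
  also have "\<dots> = integral\<^sup>L nu (\<lambda>z. ?A * (?R1 z * cnj 1) + ?B * (?R1 z * cnj (z ^ 1)) - ?D * (?R0 z * cnj 1))"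
  proof (rule circ_eq)
    fix z :: complex assume z: "cmod z = 1"
    then have z0: "z \<noteq> 0" by auto
    show "Rn c d (Suc (Suc n)) z * cnj (z ^ 1) = ?A * (?R1 z * cnj 1) + ?B * (?R1 z * cnj (z ^ 1)) - ?D * (?R0 z * cnj 1)"
      using z0 by (simp add: cnj_circ[OF z] field_simps)
  qed (use c1 cont_Rn in \<open>auto intro!: continuous_intros\<close>)
  also have "\<dots> = ?A * ip nu ?R1 (\<lambda>z. 1) + ?B * ip nu ?R1 (\<lambda>z. z ^ 1) - ?D * ip nu ?R0 (\<lambda>z. 1)"
  proof -
    have i1: "integrable nu (\<lambda>z. ?A * (?R1 z * cnj 1))" "integrable nu (\<lambda>z. ?B * (?R1 z * cnj (z ^ 1)))"
      "integrable nu (\<lambda>z. ?D * (?R0 z * cnj 1))"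
      using c1 by (auto intro!: int_cont continuous_intros)
    show ?thesis
      unfolding ip_def Bochner_Integration.integral_diff[OF Bochner_Integration.integrable_add[OF i1(1,2)] i1(3)]
        Bochner_Integration.integral_add[OF i1(1,2)] integral_mult_right_zero by simp
  qed
  also have "ip nu ?R1 (\<lambda>z. z ^ 1) = In (Suc n)" using R_mom[of 1 "Suc n"] by simp
  finally show ?thesis unfolding In_def by (simp add: field_simps)
qed

lemma In_gam: "In n = of_real (gam M n)"
proof (induction n rule: less_induct)
  case (less n)
  show ?case
  proof (cases n)
    case 0 then show ?thesis by (simp add: In0)
  next
    case (Suc m)
    show ?thesis
    proof (cases m)
      case 0 then show ?thesis using Suc In1 by simp
    next
      case (Suc k)
      have I1: "In (Suc k) = of_real (gam M (Suc k))" using less.IH[of "Suc k"] \<open>n = Suc m\<close> Suc by simp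
      have I0: "In k = of_real (gam M k)" using less.IH[of k] \<open>n = Suc m\<close> Suc by simp
      have dd: "complex_of_real (d (Suc (Suc k))) = (1 - complex_of_real (M (Suc k))) * complex_of_real (M (Suc (Suc k)))"
        using d_eq[of "Suc k"] by simp
      show ?thesis unfolding \<open>n = Suc m\<close> Suc In_rec I1 I0 dd
        by (simp add: algebra_simps)
    qed
  qed
qed

lemma cay_real:
  assumes z: "cmod z = 1" and z1: "z \<noteq> 1"
  shows "complex_of_real (Re (\<i> * (z + 1) / (z - 1))) = \<i> * (z + 1) / (z - 1)"
proof -
  have z0: "z \<noteq> 0" using z by auto
  have s: "z - 1 \<noteq> 0" "1 - z \<noteq> 0" using z1 by auto
  have "cnj (\<i> * (z + 1) / (z - 1)) = - \<i> * (inverse z + 1) / (inverse z - 1)"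
    by (simp add: cnj_circ[OF z])
  also have "\<dots> = \<i> * (z + 1) / (z - 1)"
    using z0 s by (simp add: field_simps)
  finally show ?thesis using Reals_cnj_iff of_real_Re by blast
qed

lemma pointwise:
  assumes z: "cmod z = 1" and z1: "z \<noteq> 1" and jn: "j \<le> n"
  shows "complex_of_real ((Re (\<i> * (z + 1) / (z - 1))) ^ j * Pn c d n (Re (\<i> * (z + 1) / (z - 1))) /
       ((Re (\<i> * (z + 1) / (z - 1)))\<^sup>2 + 1) ^ n)
     = \<i> ^ j * (-1) ^ (n - j) / (2 * \<i>) ^ n * (Rn c d n z * cnj (poly ([:1, 1:] ^ j * [:-1, 1:] ^ (n - j)) z))"
proof -
  define w where "w = \<i> * (z + 1) / (z - 1)"
  define e where "e = n - j"
  have n: "n = j + e" using jn by (simp add: e_def)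
  have z0: "z \<noteq> 0" using z by auto
  have s: "z - 1 \<noteq> 0" using z1 by auto
  have wr: "complex_of_real (Re w) = w" unfolding w_def by (rule cay_real[OF z z1])
  have w1: "w * (z - 1) = \<i> * (z + 1)" using s by (simp add: w_def)
  have "(w\<^sup>2 + 1) * (z - 1) ^ 2 = (w * (z - 1)) ^ 2 + (z - 1) ^ 2" by (rule gen_sq)
  also have "\<dots> = (2 * \<i>) ^ 2 * z" unfolding w1 by (simp add: power2_eq_square algebra_simps)
  finally have "(w\<^sup>2 + 1) * (z - 1) ^ 2 = (2 * \<i>) ^ 2 * z" .
  then have W2: "w\<^sup>2 + 1 = (2 * \<i>) ^ 2 * z / (z - 1) ^ 2" using s by (simp add: field_simps)
  have P: "PnC c d n w = (2 * \<i>) ^ n * Rn c d n z / (z - 1) ^ n"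
    using PR[OF z1, of c d n] s unfolding w_def[symmetric] by (simp add: field_simps)
  have "complex_of_real ((Re w) ^ j * Pn c d n (Re w) / ((Re w)\<^sup>2 + 1) ^ n) = w ^ j * PnC c d n w / (w\<^sup>2 + 1) ^ n"
    by (simp add: PnC_real wr)
  also have "\<dots> = (\<i> * (z + 1) / (z - 1)) ^ j * ((2 * \<i>) ^ n * Rn c d n z / (z - 1) ^ n) /
      ((2 * \<i>) ^ 2 * z / (z - 1) ^ 2) ^ n"
    unfolding P W2 by (simp only: w_def)
  also have "\<dots> = \<i> ^ j * (-1) ^ e / (2 * \<i>) ^ n * (Rn c d n z * (((z + 1) / z) ^ j * ((- (z - 1)) / z) ^ e))"
  proof -
    have "(\<i> * (z + 1) / (z - 1)) ^ j * ((2 * \<i>) ^ (j + e) * Rn c d n z / (z - 1) ^ (j + e)) /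
      ((2 * \<i>) ^ 2 * z / (z - 1) ^ 2) ^ (j + e) = \<i> ^ j * (-1) ^ e / (2 * \<i>) ^ (j + e) * (Rn c d n z * (((z + 1) / z) ^ j * ((- (z - 1)) / z) ^ e))"
      by (rule gen_final[OF s z0]) simp
    then show ?thesis using n by simp
  qed
  also have "((z + 1) / z) ^ j * ((- (z - 1)) / z) ^ e = cnj (poly ([:1, 1:] ^ j * [:-1, 1:] ^ (n - j)) z)"
  proof -
    have "cnj (poly ([:1, 1:] ^ j * [:-1, 1:] ^ (n - j)) z) = (inverse z + 1) ^ j * (inverse z - 1) ^ e"
      by (simp add: poly_power cnj_circ[OF z] e_def algebra_simps)
    also have "inverse z + 1 = (z + 1) / z" using z0 by (simp add: field_simps)
    also have "inverse z - 1 = (- (z - 1)) / z" using z0 by (simp add: field_simps)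
    finally show ?thesis by simp
  qed
  finally show ?thesis unfolding w_def e_def by simp
qed

lemma final:
  assumes jn: "j \<le> n"
  shows "integrable (cayley_push nu) (\<lambda>x. x ^ j * Pn c d n x / (x\<^sup>2 + 1) ^ n) \<and>
    (\<integral>x. x ^ j * Pn c d n x / (x\<^sup>2 + 1) ^ n \<partial>cayley_push nu) = (if n = j then gam M n else 0)"
proof -
  define f where "f = (\<lambda>x::real. x ^ j * Pn c d n x / (x\<^sup>2 + 1) ^ n)"
  define cay where "cay = (\<lambda>z::complex. Re (\<i> * (z + 1) / (z - 1)))"
  define Q :: "complex poly" where "Q = [:1, 1:] ^ j * [:-1, 1:] ^ (n - j)"
  define K where "K = \<i> ^ j * (-1) ^ (n - j) / (2 * \<i>) ^ n"
  define h where "h = (\<lambda>z. K * (Rn c d n z * cnj (poly Q z)))"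
  have ch: "continuous_on UNIV h" unfolding h_def by (intro continuous_intros cont_Rn)
  have ih: "integrable nu h" by (rule int_cont[OF ch])
  have x21: "(x::real)\<^sup>2 + 1 \<noteq> 0" for x
  proof -
    have "x\<^sup>2 \<ge> 0" by simp
    then show ?thesis by linarith
  qed
  have cf: "continuous_on UNIV f" unfolding f_def
    by (intro continuous_intros cont_Pn) (simp add: x21)
  have mf: "f \<in> borel_measurable borel" by (rule borel_measurable_continuous_onI[OF cf])
  have mcay: "cay \<in> borel_measurable borel" unfolding cay_def by measurable
  have mcay_nu: "cay \<in> borel_measurable nu" using mcay measurable_cong_sets[OF sets_nu refl] by blast
  have mcayr: "cay \<in> borel_measurable (restrict_space nu (- {1}))" by (rule measurable_restrict_space1[OF mcay_nu])
  have om: "- {1} \<inter> space nu \<in> sets nu" unfolding space_nu sets_nu by simp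
  have om': "- {1} \<in> sets nu" using om space_nu by simp
  have mg: "(\<lambda>z. indicator (- {1}) z *\<^sub>R f (cay z)) \<in> borel_measurable nu"
    using om' by (intro borel_measurable_scaleR borel_measurable_indicator measurable_compose[OF mcay_nu mf])
  have mRe: "(\<lambda>z. Re (h z)) \<in> borel_measurable nu" by (intro meas_cont continuous_intros ch)
  have AEeq: "AE z in nu. indicator (- {1}) z *\<^sub>R f (cay z) = Re (h z)"
    using AE_circ AE_ne1
  proof eventually_elim
    case (elim z)
    then have "complex_of_real (f (cay z)) = h z"
      unfolding f_def cay_def h_def K_def Q_def using pointwise[OF _ _ jn] by simp
    then have "f (cay z) = Re (h z)" by (metis Re_complex_of_real)
    then show ?case using elim by simp
  qed
  have int_g: "integrable nu (\<lambda>z. indicator (- {1}) z *\<^sub>R f (cay z))"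
    by (rule integrable_cong_AE_imp[OF integrable_Re[OF ih] mg]) (use AEeq in \<open>auto elim: AE_mp\<close>)
  have intf: "integrable (cayley_push nu) f"
    unfolding cayley_push_def cay_def[symmetric] integrable_distr_eq[OF mcayr mf]
      integrable_restrict_space[OF om] by (rule int_g)
  have "integral\<^sup>L (cayley_push nu) f = integral\<^sup>L (restrict_space nu (- {1})) (\<lambda>z. f (cay z))"
    unfolding cayley_push_def cay_def[symmetric] by (rule integral_distr[OF mcayr mf])
  also have "\<dots> = integral\<^sup>L nu (\<lambda>z. indicator (- {1}) z *\<^sub>R f (cay z))"
    by (rule integral_restrict_space[OF om])
  also have "\<dots> = integral\<^sup>L nu (\<lambda>z. Re (h z))"
    by (rule integral_cong_AE[OF mg mRe AEeq])
  also have "\<dots> = Re (integral\<^sup>L nu h)" by (rule integral_Re[OF ih])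
  also have "integral\<^sup>L nu h = K * ip nu (Rn c d n) (poly Q)"
    unfolding h_def ip_def by simp
  also have "\<dots> = K * (In n * cnj (poly Q 1))"
  proof -
    have "degree Q \<le> j + (n - j)" unfolding Q_def
      by (rule order.trans[OF degree_mult_le add_mono]) (auto intro: order.trans[OF degree_power_le])
    then show ?thesis using R_poly[of Q n] jn by simp
  qed
  also have "Re (K * (In n * cnj (poly Q 1))) = (if n = j then gam M n else 0)"
  proof (cases "n = j")
    case True
    have kq: "K * cnj (poly Q 1) = 1" unfolding K_def Q_def True
      by (simp add: poly_power power_mult_distrib)
    have "K * (In n * cnj (poly Q 1)) = In n * (K * cnj (poly Q 1))" by (simp only: mult_ac)
    also have "\<dots> = of_real (gam M n)" unfolding kq In_gam by simp
    finally have "Re (K * (In n * cnj (poly Q 1))) = gam M n" by (simp only: Re_complex_of_real)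
    then show ?thesis using True by simp
  next
    case False
    then have "n - j > 0" using jn by simp
    then have "poly Q 1 = 0" unfolding Q_def by (simp add: poly_power)
    then show ?thesis using False by simp
  qed
  finally show ?thesis using intf unfolding f_def by simp
qed

end

theorem theorem1p2:
  fixes c d M :: "nat \<Rightarrow> real" and \<nu> :: "complex measure"
  assumes "positive_chain_seq d"
    and "has_multiple_param_seqs d"
    and "is_max_param_seq d M"
    and "nontrivial_prob_on_circle \<nu>"
    and "\<forall>n\<ge>1. verblunsky \<nu> (n - 1) =
           (1 / tau c (n - 1)) * ((1 - 2 * of_real (M n) - \<i> * of_real (c n)) / (1 - \<i> * of_real (c n)))"
  shows "\<forall>n j. j \<le> n \<longrightarrow>
           integrable (cayley_push \<nu>) (\<lambda>x. x ^ j * Pn c d n x / (x\<^sup>2 + 1) ^ n) \<and>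
           (\<integral>x. x ^ j * Pn c d n x / (x\<^sup>2 + 1) ^ n \<partial>cayley_push \<nu>) = (if n = j then gam M n else 0)"
proof -
  interpret main \<nu> c d M
    using assms by (unfold_locales) auto
  show ?thesis using final by blast
qed

end
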